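(* Let $\Gamma$ be a finite triangle-free simplicial graph containing a $K_{3,3}$ subdivision $\Lambda$, and suppose $\Lambda$ has the minimum number of edges among all $K_{3,3}$ subdivisions $\Lambda''\subseteq\Gamma$ with $B(\Lambda'')\le B(\Lambda)$. Then $\Lambda$ has no bad edge with both endpoints on a single branch of $\Lambda$, and no bad edge connecting two $\Lambda$-non-essential vertices lying on adjacent branches of $\Lambda$.
   Context: A subdivision of a graph $H$ is obtained from $H$ by repeatedly inserting valence-two vertices into edges. For a $K_{3,3}$ subdivision $\Lambda\subseteq\Gamma$, the $\Lambda$-essential vertices are those of valence $3$ in $\Lambda$; other vertices of $\Lambda$ are $\Lambda$-non-essential. A branch of $\Lambda$ is a path in $\Lambda$ between two $\Lambda$-essential vertices with no other $\Lambda$-essential vertex on it; two branches are adjacent if they share an endpoint and disjoint otherwise. A bad edge of $\Lambda$ is an edge of $\Gamma$ not in $\Lambda$ whose endpoints are both vertices of $\Lambda$; $B(\Lambda)$ is the number of bad edges. *)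

theory Defs
  imports Main
begin

definition simple_graph :: "'a set \<Rightarrow> 'a set set \<Rightarrow> bool" where
  "simple_graph V E \<longleftrightarrow> finite V \<and> (\<forall>e\<in>E. \<exists>x y. x \<noteq> y \<and> e = {x, y} \<and> x \<in> V \<and> y \<in> V)"

definition triangle_free :: "'a set set \<Rightarrow> bool" where
  "triangle_free E \<longleftrightarrow> \<not> (\<exists>x y z. {x, y} \<in> E \<and> {y, z} \<in> E \<and> {x, z} \<in> E)"

definition is_path :: "'a set set \<Rightarrow> 'a list \<Rightarrow> bool" where
  "is_path E p \<longleftrightarrow> length p \<ge> 2 \<and> distinct p \<and>
     (\<forall>k. Suc k < length p \<longrightarrow> {p ! k, p ! Suc k} \<in> E)"

definition path_edges :: "'a list \<Rightarrow> 'a set set" where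
  "path_edges p = {{p ! k, p ! Suc k} | k. Suc k < length p}"

text \<open>(VL, EL) is a subdivision of K33: obtained from K33 with parts a 0..2, b 0..2 by
  replacing each edge a i b j with a path P i j; the paths are internally disjoint.\<close>
definition is_K33_subdivision :: "'a set \<Rightarrow> 'a set set \<Rightarrow> bool" where
  "is_K33_subdivision VL EL \<longleftrightarrow>
    (\<exists>(a :: nat \<Rightarrow> 'a) (b :: nat \<Rightarrow> 'a) (P :: nat \<Rightarrow> nat \<Rightarrow> 'a list).
       inj_on a {..<3} \<and> inj_on b {..<3} \<and> a ` {..<3} \<inter> b ` {..<3} = {} \<and>
       (\<forall>i<3. \<forall>j<3. is_path EL (P i j) \<and> hd (P i j) = a i \<and> last (P i j) = b j) \<and>
       (\<forall>i<3. \<forall>j<3. \<forall>i'<3. \<forall>j'<3. (i, j) \<noteq> (i', j') \<longrightarrow>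
            set (P i j) \<inter> set (P i' j') \<subseteq> {a i, b j}) \<and>
       VL = (\<Union>i<3. \<Union>j<3. set (P i j)) \<and>
       EL = (\<Union>i<3. \<Union>j<3. path_edges (P i j)))"

definition K33_subdivision_in :: "'a set \<Rightarrow> 'a set set \<Rightarrow> 'a set \<Rightarrow> 'a set set \<Rightarrow> bool" where
  "K33_subdivision_in V E VL EL \<longleftrightarrow> VL \<subseteq> V \<and> EL \<subseteq> E \<and> is_K33_subdivision VL EL"

definition valence :: "'a set set \<Rightarrow> 'a \<Rightarrow> nat" where
  "valence EL v = card {e \<in> EL. v \<in> e}"

definition essential :: "'a set \<Rightarrow> 'a set set \<Rightarrow> 'a \<Rightarrow> bool" where
  "essential VL EL v \<longleftrightarrow> v \<in> VL \<and> valence EL v = 3"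

definition non_essential :: "'a set \<Rightarrow> 'a set set \<Rightarrow> 'a \<Rightarrow> bool" where
  "non_essential VL EL v \<longleftrightarrow> v \<in> VL \<and> \<not> essential VL EL v"

definition is_branch :: "'a set \<Rightarrow> 'a set set \<Rightarrow> 'a list \<Rightarrow> bool" where
  "is_branch VL EL p \<longleftrightarrow> is_path EL p \<and> essential VL EL (hd p) \<and> essential VL EL (last p) \<and>
     (\<forall>k. 0 < k \<and> Suc k < length p \<longrightarrow> \<not> essential VL EL (p ! k))"

definition adjacent_branches :: "'a list \<Rightarrow> 'a list \<Rightarrow> bool" where
  "adjacent_branches p q \<longleftrightarrow> set p \<noteq> set q \<and> {hd p, last p} \<inter> {hd q, last q} \<noteq> {}"

definition bad_edges :: "'a set set \<Rightarrow> 'a set \<Rightarrow> 'a set set \<Rightarrow> 'a set set" where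
  "bad_edges E VL EL = {e \<in> E. e \<notin> EL \<and> e \<subseteq> VL}"

definition num_bad :: "'a set set \<Rightarrow> 'a set \<Rightarrow> 'a set set \<Rightarrow> nat" where
  "num_bad E VL EL = card (bad_edges E VL EL)"

end

theory Submission
  imports Defs
begin


fun pe :: "'a list \<Rightarrow> 'a set set" where
  "pe (x # y # xs) = insert {x, y} (pe (y # xs))"
| "pe _ = {}"

lemma path_edges_Cons2: "path_edges (x # y # xs) = insert {x, y} (path_edges (y # xs))"
proof
  show "path_edges (x # y # xs) \<subseteq> insert {x, y} (path_edges (y # xs))"
  proof
    fix f assume "f \<in> path_edges (x # y # xs)"
    then obtain k where k: "Suc k < length (x # y # xs)" "f = {(x # y # xs) ! k, (x # y # xs) ! Suc k}"
      unfolding path_edges_def by blast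
    show "f \<in> insert {x, y} (path_edges (y # xs))"
    proof (cases k)
      case 0 then show ?thesis using k by simp
    next
      case (Suc k') then show ?thesis using k unfolding path_edges_def by auto
    qed
  qed
next
  show "insert {x, y} (path_edges (y # xs)) \<subseteq> path_edges (x # y # xs)"
  proof
    fix f assume f: "f \<in> insert {x, y} (path_edges (y # xs))"
    show "f \<in> path_edges (x # y # xs)"
    proof (cases "f = {x,y}")
      case True
      then show ?thesis unfolding path_edges_def by (rule_tac CollectI, rule_tac x=0 in exI) auto
    next
      case False
      then obtain k where k: "Suc k < length (y # xs)" "f = {(y # xs) ! k, (y # xs) ! Suc k}"
        using f unfolding path_edges_def by blast
      then show ?thesis unfolding path_edges_def by (rule_tac CollectI, rule_tac x="Suc k" in exI) auto
    qed
  qed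
qed

lemma path_edges_short: "length xs < 2 \<Longrightarrow> path_edges xs = {}"
  unfolding path_edges_def by auto

lemma path_edges_pe: "path_edges xs = pe xs"
  by (induction xs rule: pe.induct) (auto simp: path_edges_Cons2 path_edges_short)

lemma pe_nth: "f \<in> pe xs \<longleftrightarrow> (\<exists>k. Suc k < length xs \<and> f = {xs ! k, xs ! Suc k})"
  unfolding path_edges_pe[symmetric] path_edges_def by blast

lemma is_path_pe: "is_path E p \<longleftrightarrow> 2 \<le> length p \<and> distinct p \<and> pe p \<subseteq> E"
proof -
  have "pe p \<subseteq> E \<longleftrightarrow> (\<forall>k. Suc k < length p \<longrightarrow> {p ! k, p ! Suc k} \<in> E)"
    by (auto simp: subset_iff pe_nth)
  then show ?thesis unfolding is_path_def by simp
qed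

lemma pe_Cons: "pe (x # xs) = (if xs = [] then {} else insert {x, hd xs} (pe xs))"
  by (cases xs) auto

lemma pe_append: "pe (xs @ ys) = pe xs \<union> pe ys \<union> (if xs \<noteq> [] \<and> ys \<noteq> [] then {{last xs, hd ys}} else {})"
  by (induction xs rule: pe.induct) (auto simp: pe_Cons)

lemma pe_rev: "pe (rev xs) = pe xs"
  by (induction xs) (auto simp: pe_append pe_Cons last_rev insert_commute)

lemma pe_sub: "f \<in> pe xs \<Longrightarrow> f \<subseteq> set xs"
  by (induction xs rule: pe.induct) auto

lemma pe_ne: "f \<in> pe xs \<Longrightarrow> \<exists>x y. f = {x,y}"
  by (induction xs rule: pe.induct) auto

lemma pe_finite: "finite (pe xs)"
  by (induction xs rule: pe.induct) auto

locale k33 =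
  fixes a b :: "nat \<Rightarrow> 'a" and P :: "nat \<Rightarrow> nat \<Rightarrow> 'a list" and VL :: "'a set" and EL :: "'a set set"
  assumes ainj: "\<And>i i'. i < 3 \<Longrightarrow> i' < 3 \<Longrightarrow> a i = a i' \<Longrightarrow> i = i'"
    and binj: "\<And>j j'. j < 3 \<Longrightarrow> j' < 3 \<Longrightarrow> b j = b j' \<Longrightarrow> j = j'"
    and disj: "\<And>i j. i < 3 \<Longrightarrow> j < 3 \<Longrightarrow> a i \<noteq> b j"
    and len: "\<And>i j. i < 3 \<Longrightarrow> j < 3 \<Longrightarrow> 2 \<le> length (P i j)"
    and dist: "\<And>i j. i < 3 \<Longrightarrow> j < 3 \<Longrightarrow> distinct (P i j)"
    and hdP: "\<And>i j. i < 3 \<Longrightarrow> j < 3 \<Longrightarrow> hd (P i j) = a i"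
    and lastP: "\<And>i j. i < 3 \<Longrightarrow> j < 3 \<Longrightarrow> last (P i j) = b j"
    and inter: "\<And>i j i' j'. i < 3 \<Longrightarrow> j < 3 \<Longrightarrow> i' < 3 \<Longrightarrow> j' < 3 \<Longrightarrow> (i, j) \<noteq> (i', j')
        \<Longrightarrow> set (P i j) \<inter> set (P i' j') \<subseteq> {a i, b j}"
    and VL_eq: "VL = (\<Union>i<3. \<Union>j<3. set (P i j))"
    and EL_eq: "EL = (\<Union>i<3. \<Union>j<3. pe (P i j))"

lemma K33_iff: "is_K33_subdivision VL EL \<longleftrightarrow> (\<exists>a b P. k33 a b P VL EL)"
proof
  assume "is_K33_subdivision VL EL"
  then obtain a :: "nat \<Rightarrow> 'a" and b :: "nat \<Rightarrow> 'a" and P :: "nat \<Rightarrow> nat \<Rightarrow> 'a list" where h: "inj_on a {..<3}" "inj_on b {..<3}" "a ` {..<3} \<inter> b ` {..<3} = {}"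
       "(\<forall>i<3. \<forall>j<3. is_path EL (P i j) \<and> hd (P i j) = a i \<and> last (P i j) = b j)"
       "(\<forall>i<3. \<forall>j<3. \<forall>i'<3. \<forall>j'<3. (i, j) \<noteq> (i', j') \<longrightarrow>
            set (P i j) \<inter> set (P i' j') \<subseteq> {a i, b j})"
       "VL = (\<Union>i<3. \<Union>j<3. set (P i j))"
       "EL = (\<Union>i<3. \<Union>j<3. path_edges (P i j))"
    unfolding is_K33_subdivision_def by (elim exE conjE) 
  have "k33 a b P VL EL"
  proof
    show "\<And>i i'. i < 3 \<Longrightarrow> i' < 3 \<Longrightarrow> a i = a i' \<Longrightarrow> i = i'" using h(1) by (auto dest: inj_onD)
    show "\<And>i i'. i < 3 \<Longrightarrow> i' < 3 \<Longrightarrow> b i = b i' \<Longrightarrow> i = i'" using h(2) by (auto dest: inj_onD)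
    show "\<And>i j. i < 3 \<Longrightarrow> j < 3 \<Longrightarrow> a i \<noteq> b j" using h(3) by auto
    show "\<And>i j. i < 3 \<Longrightarrow> j < 3 \<Longrightarrow> 2 \<le> length (P i j)" using h(4) by (simp add: is_path_pe)
    show "\<And>i j. i < 3 \<Longrightarrow> j < 3 \<Longrightarrow> distinct (P i j)" using h(4) by (simp add: is_path_pe)
    show "\<And>i j. i < 3 \<Longrightarrow> j < 3 \<Longrightarrow> hd (P i j) = a i" using h(4) by simp
    show "\<And>i j. i < 3 \<Longrightarrow> j < 3 \<Longrightarrow> last (P i j) = b j" using h(4) by simp
    show "\<And>i j i' j'. i < 3 \<Longrightarrow> j < 3 \<Longrightarrow> i' < 3 \<Longrightarrow> j' < 3 \<Longrightarrow> (i, j) \<noteq> (i', j')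
        \<Longrightarrow> set (P i j) \<inter> set (P i' j') \<subseteq> {a i, b j}" using h(5) by simp
    show "VL = (\<Union>i<3. \<Union>j<3. set (P i j))" by (fact h(6))
    show "EL = (\<Union>i<3. \<Union>j<3. pe (P i j))" using h(7) by (simp add: path_edges_pe)
  qed
  then show "\<exists>a b P. k33 a b P VL EL" by blast
next
  assume "\<exists>a b P. k33 a b P VL EL"
  then obtain a b P where k: "k33 a b P VL EL" by blast
  interpret k33 a b P VL EL by (fact k)
  show "is_K33_subdivision VL EL"
    unfolding is_K33_subdivision_def
  proof (intro exI conjI)
    show "inj_on a {..<3}" by (auto intro!: inj_onI ainj)
    show "inj_on b {..<3}" by (auto intro!: inj_onI binj)
    show "a ` {..<3} \<inter> b ` {..<3} = {}" using disj by auto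
    show "\<forall>i<3. \<forall>j<3. is_path EL (P i j) \<and> hd (P i j) = a i \<and> last (P i j) = b j"
      using len dist hdP lastP by (auto simp: is_path_pe EL_eq)
    show "\<forall>i<3. \<forall>j<3. \<forall>i'<3. \<forall>j'<3. (i, j) \<noteq> (i', j') \<longrightarrow> set (P i j) \<inter> set (P i' j') \<subseteq> {a i, b j}"
      using inter by simp
    show "VL = (\<Union>i<3. \<Union>j<3. set (P i j))" by (fact VL_eq)
    show "EL = (\<Union>i<3. \<Union>j<3. path_edges (P i j))" by (simp add: EL_eq path_edges_pe)
  qed
qed

context k33 begin

lemma inter2: "i < 3 \<Longrightarrow> j < 3 \<Longrightarrow> i' < 3 \<Longrightarrow> j' < 3 \<Longrightarrow> (i, j) \<noteq> (i', j')
   \<Longrightarrow> set (P i j) \<inter> set (P i' j') \<subseteq> {a i, b j} \<inter> {a i', b j'}"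
  using inter[of i j i' j'] inter[of i' j' i j] by blast

lemma interior_unique: "i < 3 \<Longrightarrow> j < 3 \<Longrightarrow> k < 3 \<Longrightarrow> l < 3 \<Longrightarrow> (k, l) \<noteq> (i, j)
  \<Longrightarrow> x \<in> set (P i j) \<Longrightarrow> x \<noteq> a i \<Longrightarrow> x \<noteq> b j \<Longrightarrow> x \<notin> set (P k l)"
  using inter[of i j k l] by blast

lemma nth0: "i < 3 \<Longrightarrow> j < 3 \<Longrightarrow> P i j ! 0 = a i"
  using hdP[of i j] len[of i j] by (metis hd_conv_nth list.size(3) not_numeral_le_zero)

lemma nthlast: "i < 3 \<Longrightarrow> j < 3 \<Longrightarrow> P i j ! (length (P i j) - 1) = b j"
  using lastP[of i j] len[of i j] by (metis last_conv_nth list.size(3) not_numeral_le_zero)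

lemma a_in: "i < 3 \<Longrightarrow> j < 3 \<Longrightarrow> a i \<in> set (P i j)"
  using hdP[of i j] len[of i j] by (metis hd_in_set list.size(3) not_numeral_le_zero)

lemma b_in: "i < 3 \<Longrightarrow> j < 3 \<Longrightarrow> b j \<in> set (P i j)"
  using lastP[of i j] len[of i j] by (metis last_in_set list.size(3) not_numeral_le_zero)

lemma pe_EL: "i < 3 \<Longrightarrow> j < 3 \<Longrightarrow> pe (P i j) \<subseteq> EL"
  using EL_eq by blast

lemma set_VL: "i < 3 \<Longrightarrow> j < 3 \<Longrightarrow> set (P i j) \<subseteq> VL"
  using VL_eq by blast

lemma finite_EL: "finite EL"
  by (simp add: EL_eq pe_finite)

lemma finite_VL: "finite VL"
  by (simp add: VL_eq)

lemma EL_E: "f \<in> EL \<Longrightarrow> \<exists>i<3. \<exists>j<3. f \<in> pe (P i j)"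
  using EL_eq by blast

lemma swap: "k33 b a (\<lambda>i j. rev (P j i)) VL EL"
proof
  show "VL = (\<Union>i<3. \<Union>j<3. set (rev (P j i)))" using VL_eq by auto
  show "EL = (\<Union>i<3. \<Union>j<3. pe (rev (P j i)))" using EL_eq by (auto simp: pe_rev)
  show "\<And>i j. i < 3 \<Longrightarrow> j < 3 \<Longrightarrow> hd (rev (P j i)) = b i" using lastP by (simp add: hd_rev)
  show "\<And>i j. i < 3 \<Longrightarrow> j < 3 \<Longrightarrow> last (rev (P j i)) = a j" using hdP by (simp add: last_rev)
  show "\<And>i j i' j'. i < 3 \<Longrightarrow> j < 3 \<Longrightarrow> i' < 3 \<Longrightarrow> j' < 3 \<Longrightarrow> (i, j) \<noteq> (i', j')
        \<Longrightarrow> set (rev (P j i)) \<inter> set (rev (P j' i')) \<subseteq> {b i, a j}"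
  proof -
    fix i j i' j' assume "i < (3::nat)" "j < (3::nat)" "i' < (3::nat)" "j' < (3::nat)" "(i, j) \<noteq> (i', j')"
    then have "set (P j i) \<inter> set (P j' i') \<subseteq> {a j, b i}" using inter[of j i j' i'] by auto
    then show "set (rev (P j i)) \<inter> set (rev (P j' i')) \<subseteq> {b i, a j}" by auto
  qed
qed (use ainj binj disj len dist in \<open>auto dest: disj[symmetric]\<close>)

lemma edge_interior:
  assumes ij: "i < 3" "j < 3" and k: "0 < k" "Suc k < length (P i j)" and f: "f \<in> EL" "P i j ! k \<in> f"
  shows "f = {P i j ! (k - 1), P i j ! k} \<or> f = {P i j ! k, P i j ! Suc k}"
proof -
  let ?Q = "P i j"
  obtain i' j' where i'j': "i' < 3" "j' < 3" "f \<in> pe (P i' j')" using EL_E[OF f(1)] by blast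
  have d: "distinct ?Q" using dist ij by simp
  have "?Q ! k \<noteq> ?Q ! 0" using k by (subst nth_eq_iff_index_eq[OF d]) auto
  then have ne_a: "?Q ! k \<noteq> a i" using nth0[OF ij] by simp
  have "?Q ! k \<noteq> ?Q ! (length ?Q - 1)" using k by (subst nth_eq_iff_index_eq[OF d]) auto
  then have ne_b: "?Q ! k \<noteq> b j" using nthlast[OF ij] by simp
  have "(i', j') = (i, j)"
  proof (rule ccontr)
    assume "(i', j') \<noteq> (i, j)"
    moreover have "?Q ! k \<in> set (P i' j')" using pe_sub[OF i'j'(3)] f(2) by blast
    moreover have "?Q ! k \<in> set ?Q" using k by simp
    ultimately show False using interior_unique[OF ij i'j'(1,2)] ne_a ne_b by blast
  qed
  then have "f \<in> pe ?Q" using i'j' by simp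
  then obtain m where m: "Suc m < length ?Q" "f = {?Q ! m, ?Q ! Suc m}" unfolding pe_nth by blast
  have "?Q ! k = ?Q ! m \<or> ?Q ! k = ?Q ! Suc m" using m f(2) by auto
  then have "k = m \<or> k = Suc m" using d m k by (auto simp: nth_eq_iff_index_eq)
  then show ?thesis using m by auto
qed

lemma card2: "card {A, B} \<le> 2"
  by (cases "A = B") auto

lemma interior_val: "i < 3 \<Longrightarrow> j < 3 \<Longrightarrow> 0 < k \<Longrightarrow> Suc k < length (P i j) \<Longrightarrow>
   \<not> essential VL EL (P i j ! k)"
proof -
  assume a: "i < 3" "j < 3" "0 < k" "Suc k < length (P i j)"
  have sub: "{f \<in> EL. P i j ! k \<in> f} \<subseteq> {{P i j ! (k - 1), P i j ! k}, {P i j ! k, P i j ! Suc k}}"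
    using edge_interior[OF a] by blast
  have "card {f \<in> EL. P i j ! k \<in> f} \<le> card {{P i j ! (k - 1), P i j ! k}, {P i j ! k, P i j ! Suc k}}"
    by (rule card_mono[OF _ sub]) simp
  then have "valence EL (P i j ! k) \<le> 2" unfolding valence_def
    using card2[of "{P i j ! (k - 1), P i j ! k}" "{P i j ! k, P i j ! Suc k}"] by linarith
  then show ?thesis unfolding essential_def by simp
qed

lemma val_a: assumes i: "i < 3" shows "valence EL (a i) = 3"
proof -
  have eq: "{f \<in> EL. a i \<in> f} = (\<lambda>l. {a i, P i l ! 1}) ` {..<3}"
  proof
    show "{f \<in> EL. a i \<in> f} \<subseteq> (\<lambda>l. {a i, P i l ! 1}) ` {..<3}"
    proof
      fix f assume "f \<in> {f \<in> EL. a i \<in> f}"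
      then have f: "f \<in> EL" "a i \<in> f" by auto
      obtain k l where kl: "k < 3" "l < 3" "f \<in> pe (P k l)" using EL_E[OF f(1)] by blast
      have ain: "a i \<in> set (P k l)" using pe_sub[OF kl(3)] f(2) by blast
      have "k = i"
      proof (rule ccontr)
        assume "k \<noteq> i"
        then have "set (P k l) \<inter> set (P i l) \<subseteq> {a k, b l}" using inter[OF kl(1,2) i kl(2)] by auto
        then have "a i \<in> {a k, b l}" using ain a_in[OF i kl(2)] by blast
        then show False using ainj[OF i kl(1)] disj[OF i kl(2)] \<open>k \<noteq> i\<close> by auto
      qed
      then have fQ: "f \<in> pe (P i l)" using kl by simp
      then obtain m where m: "Suc m < length (P i l)" "f = {P i l ! m, P i l ! Suc m}" unfolding pe_nth by blast
      have d: "distinct (P i l)" using dist i kl by simp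
      have "P i l ! 0 = P i l ! m \<or> P i l ! 0 = P i l ! Suc m" using m f(2) nth0[OF i kl(2)] by auto
      moreover have "P i l \<noteq> []" using m by auto
      moreover have "P i l ! 0 = P i l ! m \<Longrightarrow> m = 0" using nth_eq_iff_index_eq[OF d, of 0 m] m \<open>P i l \<noteq> []\<close> by auto
      moreover have "P i l ! 0 \<noteq> P i l ! Suc m" using nth_eq_iff_index_eq[OF d, of 0 "Suc m"] m \<open>P i l \<noteq> []\<close> by auto
      ultimately have "m = 0" by blast
      then show "f \<in> (\<lambda>l. {a i, P i l ! 1}) ` {..<3}" using m nth0[OF i kl(2)] kl(2) by auto
    qed
    show "(\<lambda>l. {a i, P i l ! 1}) ` {..<3} \<subseteq> {f \<in> EL. a i \<in> f}"
    proof
      fix f assume "f \<in> (\<lambda>l. {a i, P i l ! 1}) ` {..<3}"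
      then obtain l where l: "l < 3" "f = {a i, P i l ! 1}" by auto
      have "f \<in> pe (P i l)" unfolding pe_nth using l len[OF i l(1)] nth0[OF i l(1)]
        by (rule_tac x=0 in exI) auto
      then show "f \<in> {f \<in> EL. a i \<in> f}" using pe_EL[OF i l(1)] l by auto
    qed
  qed
  have "inj_on (\<lambda>l. {a i, P i l ! 1}) {..<3}"
  proof (rule inj_onI)
    fix l l' assume l: "l \<in> {..<(3::nat)}" "l' \<in> {..<(3::nat)}" and e: "{a i, P i l ! 1} = {a i, P i l' ! 1}"
    have l3: "l < 3" "l' < 3" using l by auto
    have "P i l ! 1 \<noteq> P i l ! 0" using len[OF i l3(1)]
      by (subst nth_eq_iff_index_eq[OF dist[OF i l3(1)]]) auto
    then have "P i l ! 1 \<noteq> a i" using nth0[OF i l3(1)] by simp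
    then have eq1: "P i l ! 1 = P i l' ! 1" using e by (metis doubleton_eq_iff)
    show "l = l'"
    proof (rule ccontr)
      assume "l \<noteq> l'"
      have "P i l ! 1 \<in> set (P i l)" "P i l' ! 1 \<in> set (P i l')" using len[OF i l3(1)] len[OF i l3(2)] by auto
      then have "P i l ! 1 \<in> {a i, b l} \<inter> {a i, b l'}" using inter2[OF i l3(1) i l3(2)] \<open>l \<noteq> l'\<close> eq1 by auto
      then show False using \<open>P i l ! 1 \<noteq> a i\<close> binj[OF l3] \<open>l \<noteq> l'\<close> by auto
    qed
  qed
  then have "card ((\<lambda>l. {a i, P i l ! 1}) ` {..<3}) = 3" by (simp add: card_image)
  then show ?thesis unfolding valence_def eq .
qed


lemma ess_a: "i < 3 \<Longrightarrow> essential VL EL (a i)"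
  unfolding essential_def using val_a a_in[of i 0] set_VL[of i 0] by auto

lemma ess_b: "j < 3 \<Longrightarrow> essential VL EL (b j)"
proof -
  interpret s: k33 b a "\<lambda>i j. rev (P j i)" VL EL by (rule swap)
  show "j < 3 \<Longrightarrow> essential VL EL (b j)" by (rule s.ess_a)
qed

lemma ess_cases: assumes "essential VL EL v" shows "(\<exists>i<3. v = a i) \<or> (\<exists>j<3. v = b j)"
proof -
  have "v \<in> VL" using assms unfolding essential_def by simp
  then have "\<exists>i<3. \<exists>j<3. v \<in> set (P i j)" unfolding VL_eq by auto
  then obtain i j where ij: "i < 3" "j < 3" "v \<in> set (P i j)" by blast
  then obtain k where k: "k < length (P i j)" "v = P i j ! k" by (metis in_set_conv_nth)
  show ?thesis
  proof (cases "k = 0")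
    case True then have "v = a i" using nth0[OF ij(1,2)] k by simp
    then show ?thesis using ij(1) by blast
  next
    case False
    show ?thesis
    proof (cases "Suc k = length (P i j)")
      case True then have "k = length (P i j) - 1" by simp
      then have "v = b j" using nthlast[OF ij(1,2)] k by simp
      then show ?thesis using ij(2) by blast
    next
      case False
      then have "Suc k < length (P i j)" using k by simp
      then have "\<not> essential VL EL v" using interior_val[OF ij(1,2), of k] \<open>k \<noteq> 0\<close> k by simp
      then show ?thesis using assms by simp
    qed
  qed
qed

lemma noness: "i < 3 \<Longrightarrow> j < 3 \<Longrightarrow> \<not> essential VL EL u \<Longrightarrow> u \<noteq> a i \<and> u \<noteq> b j"
  by (metis ess_a ess_b)


lemma a_edges:
  assumes i: "i < 3" and f: "f \<in> EL" "a i \<in> f"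
  shows "\<exists>l<3. f = {a i, P i l ! 1}"
proof -
  obtain k l where kl: "k < 3" "l < 3" "f \<in> pe (P k l)" using EL_E[OF f(1)] by blast
  have ain: "a i \<in> set (P k l)" using pe_sub[OF kl(3)] f(2) by blast
  have "k = i"
  proof (rule ccontr)
    assume "k \<noteq> i"
    then have "set (P k l) \<inter> set (P i l) \<subseteq> {a k, b l}" using inter[OF kl(1,2) i kl(2)] by auto
    then have "a i \<in> {a k, b l}" using ain a_in[OF i kl(2)] by blast
    then show False using ainj[OF i kl(1)] disj[OF i kl(2)] \<open>k \<noteq> i\<close> by auto
  qed
  then have fQ: "f \<in> pe (P i l)" using kl by simp
  then obtain m where m: "Suc m < length (P i l)" "f = {P i l ! m, P i l ! Suc m}" unfolding pe_nth by blast
  have d: "distinct (P i l)" using dist i kl by simp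
  have "P i l ! 0 = P i l ! m \<or> P i l ! 0 = P i l ! Suc m" using m f(2) nth0[OF i kl(2)] by auto
  moreover have "P i l \<noteq> []" using m by auto
  moreover have "P i l ! 0 = P i l ! m \<Longrightarrow> m = 0" using nth_eq_iff_index_eq[OF d, of 0 m] m \<open>P i l \<noteq> []\<close> by auto
  moreover have "P i l ! 0 \<noteq> P i l ! Suc m" using nth_eq_iff_index_eq[OF d, of 0 "Suc m"] m \<open>P i l \<noteq> []\<close> by auto
  ultimately have "m = 0" by blast
  then show ?thesis using m nth0[OF i kl(2)] kl(2) by auto
qed

lemma walk:
  assumes br: "is_branch VL EL p" and i: "i < 3" and h: "hd p = a i"
  shows "\<exists>j<3. p = P i j"
proof -
  have pp: "2 \<le> length p" "distinct p" "pe p \<subseteq> EL" using br unfolding is_branch_def is_path_pe by auto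
  have ehd: "essential VL EL (hd p)" and elast: "essential VL EL (last p)"
    and int: "\<And>k. 0 < k \<Longrightarrow> Suc k < length p \<Longrightarrow> \<not> essential VL EL (p ! k)"
    using br unfolding is_branch_def by auto
  have p0: "p ! 0 = a i" using h pp(1) by (metis hd_conv_nth list.size(3) not_numeral_le_zero)
  have "{p ! 0, p ! 1} \<in> pe p" unfolding pe_nth using pp(1) by (rule_tac x=0 in exI) auto
  then have "{a i, p ! 1} \<in> EL" using pp(3) p0 by auto
  then obtain l where l: "l < 3" "{a i, p ! 1} = {a i, P i l ! 1}" using a_edges[OF i] by blast
  let ?Q = "P i l"
  have dQ: "distinct ?Q" using dist[OF i l(1)] .
  have lQ: "2 \<le> length ?Q" using len[OF i l(1)] .
  have "p ! 1 \<noteq> p ! 0" using pp(1) by (subst nth_eq_iff_index_eq[OF pp(2)]) auto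
  then have p1: "p ! 1 = ?Q ! 1" using l(2) p0 by (metis doubleton_eq_iff)
  have claim: "Suc k < length p \<Longrightarrow> Suc k < length ?Q \<and> p ! k = ?Q ! k \<and> p ! Suc k = ?Q ! Suc k" for k
  proof (induction k)
    case 0
    then show ?case using lQ p0 p1 nth0[OF i l(1)] by auto
  next
    case (Suc k)
    then have IH: "Suc k < length ?Q" "p ! k = ?Q ! k" "p ! Suc k = ?Q ! Suc k" by auto
    have ne: "\<not> essential VL EL (p ! Suc k)" using int[of "Suc k"] Suc.prems by auto
    have sl: "Suc (Suc k) < length ?Q"
    proof (rule ccontr)
      assume "\<not> Suc (Suc k) < length ?Q"
      then have "Suc k = length ?Q - 1" using IH by auto
      then have "p ! Suc k = b l" using IH nthlast[OF i l(1)] by simp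
      then show False using ne ess_b[OF l(1)] by simp
    qed
    have "{p ! Suc k, p ! Suc (Suc k)} \<in> pe p" unfolding pe_nth using Suc.prems by blast
    then have fe: "{p ! Suc k, p ! Suc (Suc k)} \<in> EL" using pp(3) by auto
    have "{p ! Suc k, p ! Suc (Suc k)} = {?Q ! (Suc k - 1), ?Q ! Suc k} \<or>
          {p ! Suc k, p ! Suc (Suc k)} = {?Q ! Suc k, ?Q ! Suc (Suc k)}"
      using edge_interior[OF i l(1), of "Suc k"] sl fe IH by auto
    moreover have "p ! Suc (Suc k) \<noteq> p ! k" "p ! Suc (Suc k) \<noteq> p ! Suc k"
      using Suc.prems by (subst nth_eq_iff_index_eq[OF pp(2)]; simp)+
    ultimately have "p ! Suc (Suc k) = ?Q ! Suc (Suc k)" using IH by (auto simp: doubleton_eq_iff)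
    then show ?case using sl IH by simp
  qed
  have sp: "Suc (length p - 2) = length p - 1" using pp(1) by arith
  have pr: "Suc (length p - 2) < length p" using pp(1) by arith
  have c1: "length p - 1 < length ?Q" and c2: "p ! (length p - 1) = ?Q ! (length p - 1)"
    using claim[OF pr] unfolding sp by auto
  have eqlen: "length p = length ?Q"
  proof (rule ccontr)
    assume "length p \<noteq> length ?Q"
    then have lt: "Suc (length p - 1) < length ?Q" using c1 pp(1) by auto
    have "last p = p ! (length p - 1)" using pp(1) by (metis last_conv_nth list.size(3) not_numeral_le_zero)
    then have "last p = ?Q ! (length p - 1)" using c2 by simp
    moreover have "\<not> essential VL EL (?Q ! (length p - 1))"
      using interior_val[OF i l(1), of "length p - 1"] lt pp(1) by auto
    ultimately show False using elast by simp
  qed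
  have "p = ?Q"
  proof (rule nth_equalityI)
    show "length p = length ?Q" by (fact eqlen)
    fix k assume "k < length p"
    then show "p ! k = ?Q ! k"
    proof (cases k)
      case 0 then show ?thesis using p0 nth0[OF i l(1)] by simp
    next
      case (Suc k') then show ?thesis using claim[of k'] \<open>k < length p\<close> by simp
    qed
  qed
  then show ?thesis using l(1) by blast
qed

lemma branch_P:
  assumes br: "is_branch VL EL p"
  shows "\<exists>i<3. \<exists>j<3. set p = set (P i j) \<and> {hd p, last p} = {a i, b j}"
proof -
  have "essential VL EL (hd p)" using br unfolding is_branch_def by auto
  then consider (A) i where "i < 3" "hd p = a i" | (B) j where "j < 3" "hd p = b j"
    using ess_cases by blast
  then show ?thesis
  proof cases
    case A
    then obtain j where "j < 3" "p = P i j" using walk[OF br] by blast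
    then show ?thesis using A hdP lastP by auto
  next
    case B
    interpret s: k33 b a "\<lambda>i j. rev (P j i)" VL EL by (rule swap)
    obtain i where "i < 3" "p = rev (P i j)" using s.walk[OF br B(1,2)] by blast
    then show ?thesis using B hdP lastP by (auto simp: hd_rev last_rev)
  qed
qed

end




lemma pe_split: "pe (xs @ y # ys) = pe (xs @ [y]) \<union> pe (y # ys)"
  by (simp add: pe_append pe_Cons)

lemma pe_mid: "M \<noteq> [] \<Longrightarrow> f \<in> pe (x # M @ [y]) \<Longrightarrow> \<exists>z\<in>set M. z \<in> f"
  using pe_sub[of f M] pe_ne[of f M] by (auto simp: pe_append pe_Cons split: if_splits)

lemma improve:
  assumes fin: "finite VL" "finite EL" and k: "is_K33_subdivision VL' EL'"
    and sub: "VL \<subseteq> V" "EL \<subseteq> E" and e: "e \<in> E" "e \<subseteq> VL" "e \<notin> EL"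
    and VL': "VL' \<subseteq> VL" and EL': "EL' \<subseteq> EL \<union> {e}" "e \<in> EL'"
    and f: "f1 \<in> EL" "f2 \<in> EL" "f1 \<noteq> f2" "f1 \<notin> EL'" "f2 \<notin> EL'"
    and keep: "\<forall>f\<in>EL. f \<subseteq> VL' \<longrightarrow> f \<in> EL'"
  shows "K33_subdivision_in V E VL' EL' \<and> num_bad E VL' EL' \<le> num_bad E VL EL \<and> card EL' < card EL"
proof (intro conjI)
  show "K33_subdivision_in V E VL' EL'" unfolding K33_subdivision_in_def
    using k sub VL' EL' e by auto
  have "bad_edges E VL' EL' \<subseteq> bad_edges E VL EL"
    unfolding bad_edges_def using VL' keep EL'(2) by auto
  moreover have "finite (bad_edges E VL EL)"
    unfolding bad_edges_def by (rule finite_subset[of _ "Pow VL"]) (use fin in auto)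
  ultimately show "num_bad E VL' EL' \<le> num_bad E VL EL" unfolding num_bad_def by (rule card_mono[rotated])
  have "EL' \<subseteq> insert e (EL - {f1, f2})" using EL' f by auto
  then have c1: "card EL' \<le> card (insert e (EL - {f1, f2}))" by (rule card_mono[rotated]) (use fin in auto)
  have c2: "card (insert e (EL - {f1, f2})) \<le> Suc (card (EL - {f1, f2}))" by (simp add: card_insert_if fin)
  have sub2: "{f1, f2} \<subseteq> EL" using f by auto
  have c3: "card (EL - {f1, f2}) = card EL - card {f1, f2}" by (rule card_Diff_subset) (use sub2 in auto)
  have c4: "card {f1, f2} = 2" using f(3) by simp
  have c5: "card {f1, f2} \<le> card EL" by (rule card_mono[OF fin(2) sub2])
  show "card EL' < card EL" using c1 c2 c3 c4 c5 by linarith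
qed




context k33 begin

lemma shortcut:
  assumes ij: "i < 3" "j < 3" and Q: "P i j = A @ x # M @ y # B" and M: "M \<noteq> []"
    and e: "{x, y} \<in> E" "{x, y} \<notin> EL" and sub: "EL \<subseteq> E" "VL \<subseteq> V"
  shows "\<exists>VL' EL'. K33_subdivision_in V E VL' EL' \<and> num_bad E VL' EL' \<le> num_bad E VL EL \<and> card EL' < card EL"
proof -
  define Q' where "Q' = A @ x # y # B"
  define P' where "P' = (\<lambda>k l. if k = i \<and> l = j then Q' else P k l)"
  define VL' where "VL' = (\<Union>k<3. \<Union>l<3. set (P' k l))"
  define EL' where "EL' = (\<Union>k<3. \<Union>l<3. pe (P' k l))"
  have dQ: "distinct (A @ x # M @ y # B)" using dist[OF ij] Q by simp
  have setQ': "set Q' \<subseteq> set (P i j)" using Q by (auto simp: Q'_def)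
  have setP': "set (P' k l) \<subseteq> set (P k l)" for k l using setQ' by (auto simp: P'_def)
  have hdQ: "hd (P i j) \<in> set A \<union> {x}" using Q by (cases A) auto
  have hdQ': "hd Q' = a i" using hdP[OF ij] Q by (cases A) (auto simp: Q'_def)
  have lastQ: "last (P i j) \<in> set B \<union> {y}" using Q by (cases B rule: rev_cases) auto
  have lastQ': "last Q' = b j" using lastP[OF ij] Q by (simp add: Q'_def)
  have k: "k33 a b P' VL' EL'"
  proof
    show "\<And>i i'. i < 3 \<Longrightarrow> i' < 3 \<Longrightarrow> a i = a i' \<Longrightarrow> i = i'" by (rule ainj)
    show "\<And>i i'. i < 3 \<Longrightarrow> i' < 3 \<Longrightarrow> b i = b i' \<Longrightarrow> i = i'" by (rule binj)
    show "\<And>i j. i < 3 \<Longrightarrow> j < 3 \<Longrightarrow> a i \<noteq> b j" by (rule disj)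
    show "\<And>k l. k < 3 \<Longrightarrow> l < 3 \<Longrightarrow> 2 \<le> length (P' k l)" using len by (simp add: P'_def Q'_def)
    show "\<And>k l. k < 3 \<Longrightarrow> l < 3 \<Longrightarrow> distinct (P' k l)" using dist dQ by (auto simp: P'_def Q'_def)
    show "\<And>k l. k < 3 \<Longrightarrow> l < 3 \<Longrightarrow> hd (P' k l) = a k" using hdP hdQ' by (auto simp: P'_def)
    show "\<And>k l. k < 3 \<Longrightarrow> l < 3 \<Longrightarrow> last (P' k l) = b l" using lastP lastQ' by (auto simp: P'_def)
    show "\<And>k l k' l'. k < 3 \<Longrightarrow> l < 3 \<Longrightarrow> k' < 3 \<Longrightarrow> l' < 3 \<Longrightarrow> (k, l) \<noteq> (k', l')
        \<Longrightarrow> set (P' k l) \<inter> set (P' k' l') \<subseteq> {a k, b l}"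
    proof -
      fix k l k' l' assume h: "k < (3::nat)" "l < (3::nat)" "k' < (3::nat)" "l' < (3::nat)" "(k, l) \<noteq> (k', l')"
      have "set (P' k l) \<inter> set (P' k' l') \<subseteq> set (P k l) \<inter> set (P k' l')" using setP' by blast
      then show "set (P' k l) \<inter> set (P' k' l') \<subseteq> {a k, b l}" using inter[OF h] by blast
    qed
  qed (simp_all add: VL'_def EL'_def)
  then have K: "is_K33_subdivision VL' EL'" using K33_iff by blast
  have peQ: "pe (P i j) = pe (A @ [x]) \<union> pe (x # M @ [y]) \<union> pe (y # B)"
    using Q pe_split[of A x "M @ y # B"] pe_split[of "x # M" y B] by (simp add: Un_assoc)
  have peQ': "pe Q' = pe (A @ [x]) \<union> {{x, y}} \<union> pe (y # B)"
    using pe_split[of A x "y # B"] by (simp add: Q'_def)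
  have VLsub: "VL' \<subseteq> VL" unfolding VL'_def VL_eq using setP' by blast
  have ELsub: "EL' \<subseteq> EL \<union> {{x, y}}"
  proof
    fix f assume "f \<in> EL'"
    then obtain k l where kl: "k < 3" "l < 3" "f \<in> pe (P' k l)" unfolding EL'_def by blast
    show "f \<in> EL \<union> {{x, y}}"
    proof (cases "k = i \<and> l = j")
      case True
      then have "f \<in> pe Q'" using kl by (simp add: P'_def)
      then show ?thesis using peQ peQ' pe_EL[OF ij] by blast
    next
      case False
      then show ?thesis using kl pe_EL[of k l] by (auto simp: P'_def)
    qed
  qed
  have einEL': "{x, y} \<in> EL'" unfolding EL'_def using ij peQ' by (auto simp: P'_def)
  have Mnot: "z \<notin> VL'" if z: "z \<in> set M" for z
  proof
    assume "z \<in> VL'"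
    then obtain k l where kl: "k < 3" "l < 3" "z \<in> set (P' k l)" unfolding VL'_def by blast
    show False
    proof (cases "k = i \<and> l = j")
      case True
      then show False using kl z dQ by (auto simp: P'_def Q'_def)
    next
      case False
      have zQ: "z \<in> set (P i j)" using Q z by simp
      have "z \<noteq> a i" using hdP[OF ij] hdQ z dQ by auto
      moreover have "z \<noteq> b j" using lastP[OF ij] lastQ z dQ by auto
      ultimately have "z \<notin> set (P k l)" using interior_unique[OF ij kl(1,2) _ zQ] False by blast
      then show False using kl setP' by blast
    qed
  qed
  have ELsubVL': "f \<in> EL' \<Longrightarrow> f \<subseteq> VL'" for f unfolding EL'_def VL'_def using pe_sub by blast
  have f1: "{x, hd M} \<in> pe (x # M @ [y])" using M by (cases M) auto
  have f2: "{last M, y} \<in> pe (x # M @ [y])" using M pe_append[of "x # M" "[y]"] by simp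
  have f1EL: "{x, hd M} \<in> EL" and f2EL: "{last M, y} \<in> EL" using f1 f2 peQ pe_EL[OF ij] by blast+
  have f12: "{x, hd M} \<noteq> {last M, y}" using dQ M by (auto simp: doubleton_eq_iff)
  have f1n: "{x, hd M} \<notin> EL'" using ELsubVL' Mnot[of "hd M"] M by auto
  have f2n: "{last M, y} \<notin> EL'" using ELsubVL' Mnot[of "last M"] M by auto
  have keep: "\<forall>f\<in>EL. f \<subseteq> VL' \<longrightarrow> f \<in> EL'"
  proof (intro ballI impI)
    fix f assume f: "f \<in> EL" "f \<subseteq> VL'"
    obtain k l where kl: "k < 3" "l < 3" "f \<in> pe (P k l)" using EL_E[OF f(1)] by blast
    show "f \<in> EL'"
    proof (cases "k = i \<and> l = j")
      case True
      then have "f \<in> pe (P i j)" using kl by simp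
      moreover have "f \<notin> pe (x # M @ [y])" using pe_mid[OF M] Mnot f(2) by blast
      ultimately have "f \<in> pe Q'" using peQ peQ' by blast
      then show ?thesis unfolding EL'_def using ij by (auto simp: P'_def)
    next
      case False
      then show ?thesis unfolding EL'_def using kl by (auto simp: P'_def)
    qed
  qed
  have exy: "{x, y} \<subseteq> VL" using Q set_VL[OF ij] by auto
  have "K33_subdivision_in V E VL' EL' \<and> num_bad E VL' EL' \<le> num_bad E VL EL \<and> card EL' < card EL"
    by (rule improve[OF finite_VL finite_EL K sub(2,1) e(1) exy e(2) VLsub ELsub einEL' f1EL f2EL f12 f1n f2n keep])
  then show ?thesis by blast
qed

end




context k33 begin

lemma row_inter: "i < 3 \<Longrightarrow> l < 3 \<Longrightarrow> l' < 3 \<Longrightarrow> l \<noteq> l' \<Longrightarrow> set (P i l) \<inter> set (P i l') \<subseteq> {a i}"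
  using inter2[of i l i l'] binj[of l l'] disj by auto

lemma cross_inter: "i < 3 \<Longrightarrow> k < 3 \<Longrightarrow> l < 3 \<Longrightarrow> l' < 3 \<Longrightarrow> k \<noteq> i \<Longrightarrow>
   set (P i l) \<inter> set (P k l') \<subseteq> {b l} \<inter> {b l'}"
  using inter2[of i l k l'] ainj[of i k] disj by auto

lemma reroute:
  assumes ij: "i < 3" "j < 3" "j' < 3" "j \<noteq> j'"
    and Q1: "P i j = a i # Y @ u # Z" and Y: "Y \<noteq> []"
    and Q2: "P i j' = a i # Ms @ v # N" and vne: "v \<noteq> b j'"
    and e: "{u, v} \<in> E" "{u, v} \<notin> EL" and sub: "EL \<subseteq> E" "VL \<subseteq> V"
  shows "\<exists>VL' EL'. K33_subdivision_in V E VL' EL' \<and> num_bad E VL' EL' \<le> num_bad E VL EL \<and> card EL' < card EL"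
proof -
  define a' where "a' = a(i := v)"
  define P' where "P' = (\<lambda>k l. if k = i then (if l = j then v # u # Z else if l = j' then v # N
       else v # rev Ms @ P i l) else P k l)"
  define VL' where "VL' = (\<Union>k<3. \<Union>l<3. set (P' k l))"
  define EL' where "EL' = (\<Union>k<3. \<Union>l<3. pe (P' k l))"
  have d1: "distinct (a i # Y @ u # Z)" using dist[OF ij(1,2)] Q1 by simp
  have d2: "distinct (a i # Ms @ v # N)" using dist[OF ij(1,3)] Q2 by simp
  have r12: "set (P i j) \<inter> set (P i j') \<subseteq> {a i}" using row_inter ij by blast
  have vQ2: "v \<in> set (P i j')" using Q2 by simp
  have uQ1: "u \<in> set (P i j)" using Q1 by simp
  have v_other_row: "v \<notin> set (P k l)" if "k < 3" "l < 3" "k \<noteq> i" for k l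
    using cross_inter[OF ij(1) that(1) ij(3) that(2) that(3)] vQ2 vne by blast
  have v_row: "v \<notin> set (P i l)" if "l < 3" "l \<noteq> j'" for l
    using row_inter[OF ij(1) ij(3) that(1)] that(2) vQ2 d2 by force
  have vu: "v \<noteq> u" using v_row[OF ij(2,4)] uQ1 by blast
  have N: "N \<noteq> []" using lastP[OF ij(1,3)] Q2 vne by auto
  obtain l3 where l3: "l3 < 3" "l3 \<noteq> j" "l3 \<noteq> j'"
  proof -
    have "\<exists>l<3. l \<noteq> j \<and> l \<noteq> j'"
    proof (cases "j = 0 \<or> j' = 0")
      case True
      then show ?thesis
      proof (cases "j = 1 \<or> j' = 1")
        case True then show ?thesis using \<open>j = 0 \<or> j' = 0\<close> ij(4) by (rule_tac x=2 in exI) auto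
      next
        case False then show ?thesis by (rule_tac x=1 in exI) auto
      qed
    next
      case False then show ?thesis by (rule_tac x=0 in exI) auto
    qed
    then show ?thesis using that by blast
  qed
  have third: "l = l3" if "l < 3" "l \<noteq> j" "l \<noteq> j'" for l using that l3 ij by arith
  have Pil: "P i l = a i # tl (P i l)" if "l < 3" for l
    using hdP[OF ij(1) that] len[OF ij(1) that] by (cases "P i l") auto
  have MsQ2: "set Ms \<subseteq> set (P i j')" using Q2 by auto
  have NQ2: "set N \<subseteq> set (P i j')" using Q2 by auto
  have uZQ1: "set (u # Z) \<subseteq> set (P i j)" using Q1 by auto
  have YQ1: "set Y \<subseteq> set (P i j)" using Q1 by auto
  have bj'_notMs: "b j' \<notin> set Ms"
  proof
    assume "b j' \<in> set Ms"
    moreover have "b j' = last (v # N)" using lastP[OF ij(1,3)] Q2 by simp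
    then have "b j' \<in> set (v # N)" by simp
    ultimately show False using d2 by auto
  qed
  have bj_notY: "b j \<notin> set Y"
  proof
    assume "b j \<in> set Y"
    moreover have "b j = last (u # Z)" using lastP[OF ij(1,2)] Q1 by simp
    then have "b j \<in> set (u # Z)" by simp
    ultimately show False using d1 by auto
  qed
  have setP'i: "set (P' i l) = (if l = j then insert v (set (u # Z)) else if l = j' then insert v (set N)
      else insert v (set Ms \<union> set (P i l)))" for l
    by (simp add: P'_def)
  have cross': "set (P' i l) \<inter> set (P k l') \<subseteq> {b l} \<inter> {b l'}" if kl: "k < 3" "l < 3" "l' < 3" "k \<noteq> i" for k l l'
  proof -
    have vn: "v \<notin> set (P k l')" by (rule v_other_row[OF kl(1,3,4)])
    have c1: "set (P i j) \<inter> set (P k l') \<subseteq> {b j} \<inter> {b l'}" by (rule cross_inter[OF ij(1) kl(1) ij(2) kl(3,4)])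
    have c2: "set (P i j') \<inter> set (P k l') \<subseteq> {b j'} \<inter> {b l'}" by (rule cross_inter[OF ij(1) kl(1) ij(3) kl(3,4)])
    have c3: "set (P i l) \<inter> set (P k l') \<subseteq> {b l} \<inter> {b l'}" by (rule cross_inter[OF ij(1) kl(1) kl(2) kl(3,4)])
    show ?thesis
    proof (cases "l = j")
      case True then show ?thesis using vn c1 uZQ1 setP'i[of l] by auto
    next
      case False
      show ?thesis
      proof (cases "l = j'")
        case True then show ?thesis using vn c2 NQ2 setP'i[of l] \<open>l \<noteq> j\<close> by auto
      next
        case False
        have "set Ms \<inter> set (P k l') = {}" using c2 MsQ2 bj'_notMs by blast
        then show ?thesis using vn c3 setP'i[of l] \<open>l \<noteq> j\<close> False by auto
      qed
    qed
  qed
  have T12: "set (P' i j) \<inter> set (P' i j') \<subseteq> {v}"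
  proof -
    have "set (u # Z) \<inter> set N = {}" using r12 uZQ1 NQ2 d1 d2 by auto
    then show ?thesis using setP'i[of j] setP'i[of j'] ij(4) by auto
  qed
  have T13: "set (P' i j) \<inter> set (P' i l3) \<subseteq> {v}"
  proof -
    have r: "set (P i j) \<inter> set (P i l3) \<subseteq> {a i}" using row_inter[OF ij(1,2) l3(1)] l3 by auto
    have "set (u # Z) \<inter> set Ms = {}" using r12 uZQ1 MsQ2 d1 by auto
    moreover have "set (u # Z) \<inter> set (P i l3) = {}" using r uZQ1 d1 by auto
    ultimately show ?thesis using setP'i[of j] setP'i[of l3] l3 by auto
  qed
  have T23: "set (P' i j') \<inter> set (P' i l3) \<subseteq> {v}"
  proof -
    have r: "set (P i j') \<inter> set (P i l3) \<subseteq> {a i}" using row_inter[OF ij(1,3) l3(1)] l3 by auto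
    have "set N \<inter> set Ms = {}" using d2 by auto
    moreover have "set N \<inter> set (P i l3) = {}" using r NQ2 d2 by auto
    ultimately show ?thesis using setP'i[of j'] setP'i[of l3] l3 ij(4) by auto
  qed
  have rowpair: "set (P' i l) \<inter> set (P' i l') \<subseteq> {v}" if "l < 3" "l' < 3" "l \<noteq> l'" for l l'
  proof -
    have "l = j \<or> l = j' \<or> l = l3" "l' = j \<or> l' = j' \<or> l' = l3" using third that by blast+
    then show ?thesis using T12 T13 T23 that by auto
  qed
  have k: "k33 a' b P' VL' EL'"
  proof
    show "\<And>k k'. k < 3 \<Longrightarrow> k' < 3 \<Longrightarrow> a' k = a' k' \<Longrightarrow> k = k'"
    proof -
      fix k k' assume h: "k < (3::nat)" "k' < (3::nat)" "a' k = a' k'"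
      have "v \<noteq> a m" if "m < 3" "m \<noteq> i" for m using v_other_row[OF that(1) ij(3) that(2)] a_in[OF that(1) ij(3)] by blast
      then show "k = k'" using h ainj by (auto simp: a'_def split: if_splits)
    qed
    show "\<And>j j'. j < 3 \<Longrightarrow> j' < 3 \<Longrightarrow> b j = b j' \<Longrightarrow> j = j'" by (rule binj)
    show "\<And>k l. k < 3 \<Longrightarrow> l < 3 \<Longrightarrow> a' k \<noteq> b l"
    proof -
      fix k l assume h: "k < (3::nat)" "l < (3::nat)"
      have "v \<noteq> b l" using vne v_row[OF h(2)] b_in[OF ij(1) h(2)] by blast
      then show "a' k \<noteq> b l" using disj[OF h] by (auto simp: a'_def)
    qed
    show "\<And>k l. k < 3 \<Longrightarrow> l < 3 \<Longrightarrow> 2 \<le> length (P' k l)"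
    proof -
      fix k l assume h: "k < (3::nat)" "l < (3::nat)"
      have "Suc 0 \<le> length N" using N by (cases N) auto
      moreover have "2 \<le> length (P k l)" "2 \<le> length (P i l)" using len h ij by auto
      ultimately show "2 \<le> length (P' k l)" by (simp add: P'_def)
    qed
    show "\<And>k l. k < 3 \<Longrightarrow> l < 3 \<Longrightarrow> distinct (P' k l)"
    proof -
      fix k l assume h: "k < (3::nat)" "l < (3::nat)"
      show "distinct (P' k l)"
      proof (cases "k = i")
        case False then show ?thesis using dist[OF h] by (simp add: P'_def)
      next
        case True
        have dj: "distinct (v # u # Z)" using d1 v_row[OF ij(2,4)] uZQ1 by auto
        have dj': "distinct (v # N)" using d2 by auto
        have dl: "distinct (v # rev Ms @ P i l)" if "l \<noteq> j" "l \<noteq> j'"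
        proof -
          have r: "set (P i j') \<inter> set (P i l) \<subseteq> {a i}" using row_inter[OF ij(1,3) h(2)] that by auto
          have "set Ms \<inter> set (P i l) = {}" using r MsQ2 d2 by auto
          then show ?thesis using d2 dist[OF ij(1) h(2)] v_row[OF h(2) that(2)] by auto
        qed
        show ?thesis using True dj dj' dl by (simp add: P'_def)
      qed
    qed
    show "\<And>k l. k < 3 \<Longrightarrow> l < 3 \<Longrightarrow> hd (P' k l) = a' k" using hdP by (simp add: P'_def a'_def)
    show "\<And>k l. k < 3 \<Longrightarrow> l < 3 \<Longrightarrow> last (P' k l) = b l"
    proof -
      fix k l assume h: "k < (3::nat)" "l < (3::nat)"
      have "P i l \<noteq> []" using len[OF ij(1) h(2)] by auto
      then show "last (P' k l) = b l"
        using lastP[OF h] lastP[OF ij(1,2)] lastP[OF ij(1,3)] Q1 Q2 N by (auto simp: P'_def)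
    qed
    show "\<And>k l k' l'. k < 3 \<Longrightarrow> l < 3 \<Longrightarrow> k' < 3 \<Longrightarrow> l' < 3 \<Longrightarrow> (k, l) \<noteq> (k', l')
        \<Longrightarrow> set (P' k l) \<inter> set (P' k' l') \<subseteq> {a' k, b l}"
    proof -
      fix k l k' l' assume h: "k < (3::nat)" "l < (3::nat)" "k' < (3::nat)" "l' < (3::nat)" "(k, l) \<noteq> (k', l')"
      show "set (P' k l) \<inter> set (P' k' l') \<subseteq> {a' k, b l}"
      proof (cases "k = i")
        case True
        show ?thesis
        proof (cases "k' = i")
          case True
          then show ?thesis using rowpair[OF h(2,4)] h(5) \<open>k = i\<close> by (auto simp: a'_def)
        next
          case False
          then have "P' k' l' = P k' l'" by (simp add: P'_def)
          then show ?thesis using cross'[OF h(3) h(2) h(4) False] True by auto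
        qed
      next
        case False
        show ?thesis
        proof (cases "k' = i")
          case True
          have "P' k l = P k l" using False by (simp add: P'_def)
          then show ?thesis using cross'[OF h(1) h(4) h(2) False] True False by (auto simp: a'_def)
        next
          case False
          then show ?thesis using inter[OF h] \<open>k \<noteq> i\<close> by (simp add: P'_def a'_def)
        qed
      qed
    qed
  qed (simp_all add: VL'_def EL'_def)
  then have K: "is_K33_subdivision VL' EL'" using K33_iff by blast
  have peQ1: "pe (P i j) = pe (a i # Y @ [u]) \<union> pe (u # Z)" using Q1 pe_split[of "a i # Y" u Z] by simp
  have peQ2: "pe (P i j') = pe (a i # Ms @ [v]) \<union> pe (v # N)" using Q2 pe_split[of "a i # Ms" v N] by simp
  have pe1: "pe (P' i j) = insert {u, v} (pe (u # Z))" by (simp add: P'_def insert_commute)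
  have pe2: "pe (P' i j') = pe (v # N)" using ij(4) by (simp add: P'_def)
  have pe3: "pe (P' i l) = pe (a i # Ms @ [v]) \<union> pe (P i l)" if "l < 3" "l \<noteq> j" "l \<noteq> j'" for l
  proof -
    have "P' i l = (v # rev Ms) @ a i # tl (P i l)" using that Pil[OF that(1)] by (simp add: P'_def)
    then have "pe (P' i l) = pe ((v # rev Ms) @ [a i]) \<union> pe (a i # tl (P i l))" using pe_split by metis
    also have "(v # rev Ms) @ [a i] = rev (a i # Ms @ [v])" by simp
    finally show ?thesis using pe_rev Pil[OF that(1)] by metis
  qed
  have VLsub: "VL' \<subseteq> VL"
  proof -
    have "set (P' k l) \<subseteq> VL" if "k < 3" "l < 3" for k l
    proof (cases "k = i")
      case True
      then show ?thesis using setP'i[of l] set_VL[OF ij(1) that(2)] set_VL[OF ij(1,2)] set_VL[OF ij(1,3)]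
        vQ2 uZQ1 NQ2 MsQ2 by auto
    next
      case False then show ?thesis using set_VL[OF that] by (simp add: P'_def)
    qed
    then show ?thesis unfolding VL'_def by blast
  qed
  have ELsub: "EL' \<subseteq> EL \<union> {{u, v}}"
  proof
    fix f assume "f \<in> EL'"
    then obtain k l where kl: "k < 3" "l < 3" "f \<in> pe (P' k l)" unfolding EL'_def by blast
    show "f \<in> EL \<union> {{u, v}}"
    proof (cases "k = i")
      case False
      then show ?thesis using kl pe_EL[of k l] by (auto simp: P'_def)
    next
      case True
      have E1: "pe (P i j) \<subseteq> EL" "pe (P i j') \<subseteq> EL" "pe (P i l) \<subseteq> EL"
        using pe_EL ij kl by auto
      have fi: "f \<in> pe (P' i l)" using kl True by simp
      show ?thesis
      proof (cases "l = j")
        case True then show ?thesis using fi pe1 peQ1 E1(1) by auto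
      next
        case False
        show ?thesis
        proof (cases "l = j'")
          case True then show ?thesis using fi pe2 peQ2 E1(2) by auto
        next
          case False then show ?thesis using fi pe3[OF kl(2) \<open>l \<noteq> j\<close> False] peQ2 E1(2,3) by auto
        qed
      qed
    qed
  qed
  have einEL': "{u, v} \<in> EL'" unfolding EL'_def using ij pe1 by blast
  have Ynot: "y \<notin> VL'" if y: "y \<in> set Y" for y
  proof
    assume "y \<in> VL'"
    then obtain k l where kl: "k < 3" "l < 3" "y \<in> set (P' k l)" unfolding VL'_def by blast
    have yQ: "y \<in> set (P i j)" using YQ1 y by blast
    have yai: "y \<noteq> a i" using d1 y by auto
    have yv: "y \<noteq> v" using v_row[OF ij(2,4)] yQ by blast
    show False
    proof (cases "k = i")
      case False
      have "y \<noteq> b j" using bj_notY y by blast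
      then have "y \<notin> set (P k l)" using interior_unique[OF ij(1,2) kl(1,2) _ yQ yai] False by blast
      then show False using kl False by (simp add: P'_def)
    next
      case True
      have n1: "y \<notin> set (u # Z)" using d1 y by auto
      have n2: "y \<notin> set N" "y \<notin> set Ms" using r12 yQ NQ2 MsQ2 yai by blast+
      have n3: "y \<notin> set (P i l)" if "l \<noteq> j" using row_inter[OF ij(1,2) kl(2)] that yQ yai by blast
      show False using kl(3) True setP'i[of l] n1 n2 n3 yv by (auto split: if_splits)
    qed
  qed
  have ELsubVL': "f \<in> EL' \<Longrightarrow> f \<subseteq> VL'" for f unfolding EL'_def VL'_def using pe_sub by blast
  have f1: "{a i, hd Y} \<in> pe (a i # Y @ [u])" using Y by (cases Y) auto
  have f2: "{last Y, u} \<in> pe (a i # Y @ [u])" using Y pe_append[of "a i # Y" "[u]"] by simp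
  have f1EL: "{a i, hd Y} \<in> EL" and f2EL: "{last Y, u} \<in> EL" using f1 f2 peQ1 pe_EL[OF ij(1,2)] by blast+
  have f12: "{a i, hd Y} \<noteq> {last Y, u}" using d1 Y by (auto simp: doubleton_eq_iff)
  have f1n: "{a i, hd Y} \<notin> EL'" using ELsubVL' Ynot[of "hd Y"] Y by auto
  have f2n: "{last Y, u} \<notin> EL'" using ELsubVL' Ynot[of "last Y"] Y by auto
  have keep: "\<forall>f\<in>EL. f \<subseteq> VL' \<longrightarrow> f \<in> EL'"
  proof (intro ballI impI)
    fix f assume f: "f \<in> EL" "f \<subseteq> VL'"
    obtain k l where kl: "k < 3" "l < 3" "f \<in> pe (P k l)" using EL_E[OF f(1)] by blast
    have inEL': "f \<in> pe (P' k' l') \<Longrightarrow> k' < 3 \<Longrightarrow> l' < 3 \<Longrightarrow> f \<in> EL'" for k' l'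
      unfolding EL'_def by blast
    show "f \<in> EL'"
    proof (cases "k = i")
      case False
      then show ?thesis using inEL'[of k l] kl by (simp add: P'_def)
    next
      case True
      show ?thesis
      proof (cases "l = j")
        case True
        have "f \<notin> pe (a i # Y @ [u])" using pe_mid[OF Y] Ynot f(2) by blast
        then have "f \<in> pe (P' i j)" using kl \<open>k = i\<close> True peQ1 pe1 by blast
        then show ?thesis using inEL' ij by blast
      next
        case False
        show ?thesis
        proof (cases "l = j'")
          case True
          then have "f \<in> pe (a i # Ms @ [v]) \<or> f \<in> pe (v # N)" using kl \<open>k = i\<close> peQ2 by blast
          then show ?thesis using pe2 pe3[OF l3] inEL'[of i j'] inEL'[of i l3] ij l3 by blast
        next
          case False
          then show ?thesis using pe3[OF kl(2) \<open>l \<noteq> j\<close> False] kl \<open>k = i\<close> inEL'[of i l] ij by blast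
        qed
      qed
    qed
  qed
  have exy: "{u, v} \<subseteq> VL" using uQ1 vQ2 set_VL[OF ij(1,2)] set_VL[OF ij(1,3)] by auto
  have "K33_subdivision_in V E VL' EL' \<and> num_bad E VL' EL' \<le> num_bad E VL EL \<and> card EL' < card EL"
    by (rule improve[OF finite_VL finite_EL K sub(2,1) e(1) exy e(2) VLsub ELsub einEL' f1EL f2EL f12 f1n f2n keep])
  then show ?thesis by blast
qed

end




context k33 begin

lemma part1:
  assumes ij: "i < 3" "j < 3" and xy: "x \<in> set (P i j)" "y \<in> set (P i j)" "x \<noteq> y"
    and e: "{x, y} \<in> E" "{x, y} \<notin> EL" and sub: "EL \<subseteq> E" "VL \<subseteq> V"
  shows "\<exists>VL' EL'. K33_subdivision_in V E VL' EL' \<and> num_bad E VL' EL' \<le> num_bad E VL EL \<and> card EL' < card EL"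
proof -
  obtain A1 R where Q: "P i j = A1 @ x # R" using xy(1) split_list by metis
  have "y \<in> set A1 \<or> y \<in> set R" using Q xy by auto
  then show ?thesis
  proof
    assume "y \<in> set R"
    then obtain M B where R: "R = M @ y # B" using split_list by metis
    show ?thesis
    proof (cases "M = []")
      case True
      then have "{x, y} \<in> pe (P i j)" using Q R pe_split[of A1 x "y # B"] by simp
      then show ?thesis using pe_EL[OF ij] e by blast
    next
      case False
      show ?thesis by (rule shortcut[OF ij _ False e sub]) (simp add: Q R)
    qed
  next
    assume "y \<in> set A1"
    then obtain A M where A1: "A1 = A @ y # M" using split_list by metis
    have e': "{y, x} \<in> E" "{y, x} \<notin> EL" using e by (simp_all add: insert_commute)
    show ?thesis
    proof (cases "M = []")
      case True
      then have "{y, x} \<in> pe (P i j)" using Q A1 pe_split[of A y "x # R"] by simp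
      then show ?thesis using pe_EL[OF ij] e' by blast
    next
      case False
      show ?thesis by (rule shortcut[OF ij _ False e' sub]) (simp add: Q A1)
    qed
  qed
qed

lemma part2:
  assumes ij: "i < 3" "j < 3" "j' < 3" "j \<noteq> j'"
    and u: "u \<in> set (P i j)" "u \<noteq> a i" "u \<noteq> b j"
    and v: "v \<in> set (P i j')" "v \<noteq> a i" "v \<noteq> b j'"
    and e: "{u, v} \<in> E" "{u, v} \<notin> EL" and tf: "triangle_free E" and sub: "EL \<subseteq> E" "VL \<subseteq> V"
  shows "\<exists>VL' EL'. K33_subdivision_in V E VL' EL' \<and> num_bad E VL' EL' \<le> num_bad E VL EL \<and> card EL' < card EL"
proof -
  have Pil: "P i l = a i # tl (P i l)" if "l < 3" for l
    using hdP[OF ij(1) that] len[OF ij(1) that] by (cases "P i l") auto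
  have "u \<in> set (tl (P i j))" using u Pil[OF ij(2)] by (metis set_ConsD)
  then obtain Y Z where YZ: "tl (P i j) = Y @ u # Z" using split_list by metis
  have "v \<in> set (tl (P i j'))" using v Pil[OF ij(3)] by (metis set_ConsD)
  then obtain Ms N where MN: "tl (P i j') = Ms @ v # N" using split_list by metis
  have Q1: "P i j = a i # Y @ u # Z" using Pil[OF ij(2)] YZ by simp
  have Q2: "P i j' = a i # Ms @ v # N" using Pil[OF ij(3)] MN by simp
  show ?thesis
  proof (cases "Y = []")
    case False
    show ?thesis by (rule reroute[OF ij Q1 False Q2 v(3) e sub])
  next
    case True
    show ?thesis
    proof (cases "Ms = []")
      case False
      have e': "{v, u} \<in> E" "{v, u} \<notin> EL" using e by (simp_all add: insert_commute)
      show ?thesis by (rule reroute[OF ij(1,3,2) ij(4)[symmetric] Q2 False Q1 u(3) e' sub])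
    next
      case Ms: True
      have "{a i, u} \<in> pe (P i j)" using Q1 True by simp
      then have 1: "{u, a i} \<in> E" using pe_EL[OF ij(1,2)] sub(1) by (auto simp: insert_commute)
      have "{a i, v} \<in> pe (P i j')" using Q2 Ms by simp
      then have 2: "{a i, v} \<in> E" using pe_EL[OF ij(1,3)] sub(1) by auto
      have False using tf 1 2 e(1) unfolding triangle_free_def by blast
      then show ?thesis ..
    qed
  qed
qed

end

theorem mainTheorem7:
  fixes V :: "'a set" and E :: "'a set set" and VL :: "'a set" and EL :: "'a set set"
  assumes "simple_graph V E"
    and "triangle_free E"
    and "K33_subdivision_in V E VL EL"
    and "\<forall>VL' EL'. K33_subdivision_in V E VL' EL' \<and> num_bad E VL' EL' \<le> num_bad E VL EL
              \<longrightarrow> card EL \<le> card EL'"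
  shows "\<forall>e \<in> bad_edges E VL EL.
           \<not> (\<exists>p. is_branch VL EL p \<and> e \<subseteq> set p) \<and>
           \<not> (\<exists>u v p q. e = {u, v} \<and> non_essential VL EL u \<and> non_essential VL EL v \<and>
                 is_branch VL EL p \<and> is_branch VL EL q \<and> adjacent_branches p q \<and>
                 u \<in> set p \<and> v \<in> set q)"
proof
  fix e assume eb: "e \<in> bad_edges E VL EL"
  have sub: "EL \<subseteq> E" "VL \<subseteq> V" and K: "is_K33_subdivision VL EL"
    using assms(3) unfolding K33_subdivision_in_def by auto
  obtain a b P where "k33 a b P VL EL" using K K33_iff by blast
  then interpret k33 a b P VL EL .
  have noimp: False if "K33_subdivision_in V E VL' EL'" "num_bad E VL' EL' \<le> num_bad E VL EL" "card EL' < card EL"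
    for VL' EL'
  proof -
    have "card EL \<le> card EL'" by (rule assms(4)[rule_format]) (use that in simp)
    then show False using that(3) by simp
  qed
  have noimp': False if "\<exists>VL' EL'. K33_subdivision_in V E VL' EL' \<and> num_bad E VL' EL' \<le> num_bad E VL EL \<and> card EL' < card EL"
    using that by (elim exE conjE) (rule noimp)
  have e: "e \<in> E" "e \<notin> EL" "e \<subseteq> VL" using eb unfolding bad_edges_def by auto
  have "\<exists>x y. x \<noteq> y \<and> e = {x, y} \<and> x \<in> V \<and> y \<in> V" using assms(1) e(1) unfolding simple_graph_def by auto
  then obtain x y where xy: "x \<noteq> y" "e = {x, y}" by blast
  show "\<not> (\<exists>p. is_branch VL EL p \<and> e \<subseteq> set p) \<and>
           \<not> (\<exists>u v p q. e = {u, v} \<and> non_essential VL EL u \<and> non_essential VL EL v \<and>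
                 is_branch VL EL p \<and> is_branch VL EL q \<and> adjacent_branches p q \<and>
                 u \<in> set p \<and> v \<in> set q)"
  proof (intro conjI notI)
    assume "\<exists>p. is_branch VL EL p \<and> e \<subseteq> set p"
    then obtain p where p: "is_branch VL EL p" "e \<subseteq> set p" by blast
    obtain i j where ij: "i < 3" "j < 3" "set p = set (P i j)" using branch_P[OF p(1)] by blast
    have xyP: "x \<in> set (P i j)" "y \<in> set (P i j)" using p(2) ij(3) xy by auto
    have "\<exists>VL' EL'. K33_subdivision_in V E VL' EL' \<and> num_bad E VL' EL' \<le> num_bad E VL EL \<and> card EL' < card EL"
      by (rule part1[OF ij(1,2) xyP xy(1) _ _ sub]) (use e xy in auto)
    then show False by (rule noimp')
  next
    assume "\<exists>u v p q. e = {u, v} \<and> non_essential VL EL u \<and> non_essential VL EL v \<and>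
                 is_branch VL EL p \<and> is_branch VL EL q \<and> adjacent_branches p q \<and>
                 u \<in> set p \<and> v \<in> set q"
    then obtain u v p q where h: "e = {u, v}" "non_essential VL EL u" "non_essential VL EL v"
      "is_branch VL EL p" "is_branch VL EL q" "adjacent_branches p q" "u \<in> set p" "v \<in> set q" by blast
    obtain i j where ij: "i < 3" "j < 3" "set p = set (P i j)" "{hd p, last p} = {a i, b j}"
      using branch_P[OF h(4)] by blast
    obtain i' j' where ij': "i' < 3" "j' < 3" "set q = set (P i' j')" "{hd q, last q} = {a i', b j'}"
      using branch_P[OF h(5)] by blast
    have ne: "(i, j) \<noteq> (i', j')" using h(6) ij(3) ij'(3) unfolding adjacent_branches_def by auto
    have "{a i, b j} \<inter> {a i', b j'} \<noteq> {}" using h(6) ij(4) ij'(4) unfolding adjacent_branches_def by simp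
    moreover have "a i \<noteq> b j'" "b j \<noteq> a i'" using disj[OF ij(1) ij'(2)] disj[OF ij'(1) ij(2)] by auto
    ultimately have "a i = a i' \<or> b j = b j'" by auto
    then have cases: "i = i' \<or> j = j'" using ainj[OF ij(1) ij'(1)] binj[OF ij(2) ij'(2)] by auto
    have un: "\<not> essential VL EL u" "\<not> essential VL EL v" using h(2,3) unfolding non_essential_def by auto
    have uP: "u \<in> set (P i j)" "u \<noteq> a i" "u \<noteq> b j" using h(7) ij(3) noness[OF ij(1,2) un(1)] by auto
    have vP: "v \<in> set (P i' j')" "v \<noteq> a i'" "v \<noteq> b j'" using h(8) ij'(3) noness[OF ij'(1,2) un(2)] by auto
    have e': "{u, v} \<in> E" "{u, v} \<notin> EL" using e h(1) by auto
    show False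
    proof (cases "i = i'")
      case True
      then have "j \<noteq> j'" using ne by simp
      have vP2: "v \<in> set (P i j')" "v \<noteq> a i" "v \<noteq> b j'" using vP True by auto
      from part2[OF ij(1,2) ij'(2) \<open>j \<noteq> j'\<close> uP vP2 e' assms(2) sub]
      show False by (rule noimp')
    next
      case False
      then have jj: "j = j'" using cases by simp
      interpret s: k33 b a "\<lambda>i j. rev (P j i)" VL EL by (rule swap)
      have uP': "u \<in> set (rev (P i j))" "u \<noteq> b j" "u \<noteq> a i" using uP by auto
      have vP': "v \<in> set (rev (P i' j))" "v \<noteq> b j" "v \<noteq> a i'" using vP jj by auto
      from s.part2[OF ij(2,1) ij'(1) False uP' vP' e' assms(2) sub]
      show False by (rule noimp')
    qed
  qed
qed


end
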